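(* Let $J$ be either a closed interval or a circle, and let $\gamma:J\to\mathbb{R}^n$ be a continuous map of bounded variation with total variation $l$. Then $\mathcal{H}^2(\gamma(J)\times\gamma(J))\leq(\pi/2)\,l^2$. In particular, $\gamma(J)\times\gamma(J)\subset\mathbb{R}^{2n}$ has finite $2$-dimensional Hausdorff measure.
   Context: $\mathcal{H}^2$ denotes $2$-dimensional Hausdorff measure, normalized so that $\mathcal{H}^2(E)=\lim_{\varepsilon\to 0}\inf\{(\pi/4)\sum_j \mathrm{diam}(A_j)^2 : E\subset\bigcup_j A_j,\ \mathrm{diam}(A_j)<\varepsilon\}$ (countable covers). *)

theory Defs
  imports "HOL-Analysis.Analysis"
begin

text \<open>The delta-approximating outer measure: infimum over countable covers
  (indexed by nat; finite covers are included via empty sets) by sets of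
  diameter less than delta. Unbounded sets have infinite diameter and are
  therefore excluded.\<close>
definition hausdorff2_approx :: "real \<Rightarrow> 'a::metric_space set \<Rightarrow> ennreal" where
  "hausdorff2_approx \<delta> E =
     (INF A \<in> {A :: nat \<Rightarrow> 'a set. E \<subseteq> (\<Union>j. A j) \<and>
                 (\<forall>j. bounded (A j) \<and> diameter (A j) < \<delta>)}.
        (\<Sum>j. ennreal (pi / 4 * (diameter (A j))\<^sup>2)))"

text \<open>The limit as delta tends to 0; the approximations are nonincreasing in
  delta, so the limit is the supremum.\<close>
definition hausdorff2 :: "'a::metric_space set \<Rightarrow> ennreal" where
  "hausdorff2 E = (SUP \<delta> \<in> {0<..}. hausdorff2_approx \<delta> E)"

definition partition_sums :: "(real \<Rightarrow> 'a::real_normed_vector) \<Rightarrow> real \<Rightarrow> real \<Rightarrow> real set" where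
  "partition_sums g a b =
     {(\<Sum>i<k. norm (g (t (Suc i)) - g (t i))) | t k.
        t 0 = a \<and> t k = b \<and> (\<forall>i<k. t i \<le> t (Suc i))}"

definition bounded_variation_on :: "(real \<Rightarrow> 'a::real_normed_vector) \<Rightarrow> real \<Rightarrow> real \<Rightarrow> bool" where
  "bounded_variation_on g a b = bdd_above (partition_sums g a b)"

definition total_variation :: "(real \<Rightarrow> 'a::real_normed_vector) \<Rightarrow> real \<Rightarrow> real \<Rightarrow> real" where
  "total_variation g a b = Sup (partition_sums g a b)"

text \<open>Curves on the circle (unit circle in the complex plane): variation is
  that of the pulled-back map t \<mapsto> c (cis (2 pi t)) on [0,1]
  (equal to the sup over cyclically ordered partitions of the circle).\<close>
definition circle_param :: "(complex \<Rightarrow> 'a) \<Rightarrow> real \<Rightarrow> 'a" where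
  "circle_param c = (\<lambda>t. c (cis (2 * pi * t)))"

definition circle_bounded_variation :: "(complex \<Rightarrow> 'a::real_normed_vector) \<Rightarrow> bool" where
  "circle_bounded_variation c = bounded_variation_on (circle_param c) 0 1"

definition circle_total_variation :: "(complex \<Rightarrow> 'a::real_normed_vector) \<Rightarrow> real" where
  "circle_total_variation c = total_variation (circle_param c) 0 1"

end

theory Submission imports Defs begin

lemma diam_prod_le:
  fixes U V :: "'a::real_normed_vector set"
  assumes "bounded U" "bounded V" "diameter U \<le> d" "diameter V \<le> d"
  shows "diameter (U \<times> V) \<le> sqrt 2 * d"
proof (rule diameter_le)
  have "0 \<le> diameter U" using diameter_ge_0[OF assms(1)] .
  then show "U \<times> V \<noteq> {} \<or> 0 \<le> sqrt 2 * d" using assms by auto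
next
  fix x y assume xy: "x \<in> U \<times> V" "y \<in> U \<times> V"
  have 1: "dist (fst x) (fst y) \<le> d" using diameter_bounded_bound[OF assms(1)] xy assms(3)
    by (metis mem_Times_iff order_trans)
  have 2: "dist (snd x) (snd y) \<le> d" using diameter_bounded_bound[OF assms(2)] xy assms(4)
    by (metis mem_Times_iff order_trans)
  have "norm (x - y) = sqrt ((dist (fst x) (fst y))\<^sup>2 + (dist (snd x) (snd y))\<^sup>2)"
    by (metis dist_norm dist_Pair_Pair prod.collapse)
  also have "\<dots> \<le> sqrt (d\<^sup>2 + d\<^sup>2)"
    using 1 2 by (intro real_sqrt_le_mono add_mono power_mono) auto
  also have "\<dots> = sqrt 2 * \<bar>d\<bar>" by (simp add: real_sqrt_mult)
  also have "\<dots> = sqrt 2 * d" using 1 zero_le_dist[of "fst x" "fst y"]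
    by (metis abs_of_nonneg order_trans)
  finally show "norm (x - y) \<le> sqrt 2 * d" .
qed

lemma approx_cover:
  fixes E :: "'a::real_normed_vector set"
  assumes cov: "E \<subseteq> (\<Union>k<K. U k)" and bd: "\<And>k. bounded (U k)"
    and dm: "\<And>k. diameter (U k) \<le> d" and dpos: "0 \<le> d" and dl: "sqrt 2 * d < \<delta>"
  shows "hausdorff2_approx \<delta> (E \<times> E) \<le> ennreal (pi / 2 * (real K * d)\<^sup>2)"
proof -
  define A where "A n = (if n < K * K then U (n div K) \<times> U (n mod K) else {})" for n
  have Abd: "bounded (A n)" for n using bd by (auto simp: A_def bounded_Times)
  have Adm: "diameter (A n) \<le> sqrt 2 * d" for n
    using diam_prod_le[OF bd bd dm dm] dpos by (auto simp: A_def)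
  have Ag0: "0 \<le> diameter (A n)" for n using diameter_ge_0[OF Abd] .
  have Acov: "E \<times> E \<subseteq> (\<Union>j. A j)"
  proof
    fix x assume "x \<in> E \<times> E"
    then have "fst x \<in> E" "snd x \<in> E" by (auto simp: mem_Times_iff)
    then obtain i j where ij: "i < K" "j < K" "fst x \<in> U i" "snd x \<in> U j"
      using cov by blast
    have lt: "i * K + j < K * K"
      proof - have "i * K + j < i * K + K" using ij by simp also have "... \<le> K * K" using ij(1) by (metis Suc_leI mult_Suc mult_le_mono1 add.commute mult.commute) finally show ?thesis . qed
    have "(i * K + j) div K = i" "(i * K + j) mod K = j" using ij by auto
    then have "x \<in> A (i * K + j)" using lt ij by (auto simp: A_def mem_Times_iff)
    then show "x \<in> (\<Union>j. A j)" by blast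
  qed
  have "hausdorff2_approx \<delta> (E \<times> E) \<le> (\<Sum>j. ennreal (pi / 4 * (diameter (A j))\<^sup>2))"
    unfolding hausdorff2_approx_def
    by (rule INF_lower) (use Acov Abd Adm dl in \<open>auto intro: le_less_trans\<close>)
  also have "\<dots> = (\<Sum>j<K*K. ennreal (pi / 4 * (diameter (A j))\<^sup>2))"
    by (rule suminf_finite) (auto simp: A_def)
  also have "\<dots> = ennreal (\<Sum>j<K*K. pi / 4 * (diameter (A j))\<^sup>2)"
    by (rule sum_ennreal) auto
  also have "\<dots> \<le> ennreal (\<Sum>j<K*K. pi / 4 * (sqrt 2 * d)\<^sup>2)"
    using Adm Ag0 by (intro ennreal_leI sum_mono mult_left_mono power_mono) auto
  also have "\<dots> = ennreal (pi / 2 * (real K * d)\<^sup>2)"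
    by (simp add: power_mult_distrib power2_eq_square)
  finally show ?thesis .
qed


lemma find_piece:
  fixes t :: "nat \<Rightarrow> real"
  shows "t 0 \<le> s \<Longrightarrow> s \<le> t (Suc m) \<Longrightarrow> \<exists>p\<le>m. t p \<le> s \<and> s \<le> t (Suc p)"
proof (induction m)
  case 0 then show ?case by auto
next
  case (Suc m)
  show ?case
  proof (cases "s \<le> t (Suc m)")
    case True then show ?thesis using Suc by (meson le_Suc_eq)
  next
    case False then show ?thesis using Suc by (intro exI[of _ "Suc m"]) auto
  qed
qed

lemma interval_cover:
  fixes g :: "real \<Rightarrow> 'a::real_normed_vector"
  assumes ab: "a \<le> b" and cont: "continuous_on {a..b} g" and bv: "bounded_variation_on g a b"
    and e: "0 < \<epsilon>"
  shows "\<exists>K U. g ` {a..b} \<subseteq> (\<Union>k<K. U k) \<and> (\<forall>k. bounded (U k))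
           \<and> (\<forall>k. diameter (U k) \<le> \<epsilon> + 2 * \<epsilon>\<^sup>2) \<and> real K \<le> total_variation g a b / \<epsilon> + 1"
proof -
  define l where "l = total_variation g a b"
  define \<eta> where "\<eta> = \<epsilon>\<^sup>2"
  have eta: "0 < \<eta>" using e by (simp add: \<eta>_def)
  have "uniformly_continuous_on {a..b} g"
    using compact_uniformly_continuous[OF cont] by simp
  then obtain \<rho> where rho: "\<rho> > 0"
    and uc: "\<And>x x'. x \<in> {a..b} \<Longrightarrow> x' \<in> {a..b} \<Longrightarrow> dist x' x < \<rho> \<Longrightarrow> dist (g x') (g x) < \<eta>"
    using eta unfolding uniformly_continuous_on_def by metis
  obtain M0 :: nat where M0: "(b - a) / \<rho> < M0" using reals_Archimedean2 by blast
  define M where "M = Suc M0"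
  have Mpos: "0 < M" by (simp add: M_def)
  have step_lt: "(b - a) / M < \<rho>"
  proof -
    have "(b - a) < \<rho> * M0" using M0 rho by (simp add: pos_divide_less_eq mult.commute)
    also have "\<dots> \<le> \<rho> * M" using rho by (simp add: M_def)
    finally show ?thesis using Mpos by (simp add: divide_less_eq mult.commute)
  qed
  define t where "t p = a + real p * (b - a) / M" for p
  have t0: "t 0 = a" by (simp add: t_def)
  have tM: "t M = b" using Mpos by (simp add: t_def)
  have tmono: "t p \<le> t q" if "p \<le> q" for p q
    using that ab Mpos unfolding t_def
    by (intro add_left_mono divide_right_mono mult_right_mono) auto
  have tin: "t p \<in> {a..b}" if "p \<le> M" for p
    using tmono[OF that] tmono[of 0 p] t0 tM by auto
  have tstep: "t (Suc p) - t p = (b - a) / M" for p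
  proof -
    have "real (Suc p) * (b - a) - real p * (b - a) = b - a" by (simp add: algebra_simps)
    then show ?thesis unfolding t_def by (simp add: diff_divide_distrib[symmetric])
  qed
  define c where "c p = norm (g (t (Suc p)) - g (t p))" for p
  define C where "C p = (\<Sum>q<p. c q)" for p
  have Cmono: "C p \<le> C q" if "p \<le> q" for p q
    unfolding C_def using that by (intro sum_mono2) (auto simp: c_def)
  have C0: "0 \<le> C p" for p unfolding C_def c_def by (intro sum_nonneg) auto
  have CM: "C M \<le> l"
  proof -
    have "C M \<in> partition_sums g a b"
      unfolding partition_sums_def mem_Collect_eq
      by (rule exI[of _ t], rule exI[of _ M]) (simp add: C_def c_def t0 tM tmono)
    then show ?thesis unfolding l_def total_variation_def
      using bv unfolding bounded_variation_on_def by (rule cSup_upper)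
  qed
  have tri: "norm (g (t q) - g (t p)) \<le> C q - C p" if "p \<le> q" for p q
    using that
  proof (induction q rule: dec_induct)
    case base then show ?case by simp
  next
    case (step q)
    have "norm (g (t (Suc q)) - g (t p)) \<le> norm (g (t (Suc q)) - g (t q)) + norm (g (t q) - g (t p))"
      by (rule order_trans[OF _ norm_triangle_ineq]) simp
    also have "\<dots> \<le> c q + (C q - C p)" using step by (simp add: c_def)
    also have "\<dots> = C (Suc q) - C p" by (simp add: C_def)
    finally show ?case .
  qed
  have close: "norm (g s - g (t p)) < \<eta>" if "p < M" "t p \<le> s" "s \<le> t (Suc p)" for p s
  proof -
    have tp: "t p \<in> {a..b}" "t (Suc p) \<in> {a..b}" using tin that(1) by auto
    then have s: "s \<in> {a..b}" using that by auto
    have "dist s (t p) < \<rho>" using that tstep[of p] step_lt by (simp add: dist_real_def)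
    then show ?thesis using uc[OF tp(1) s] by (simp add: dist_norm)
  qed
  define U where "U k = {g s | s. \<exists>p<M. t p \<le> s \<and> s \<le> t (Suc p) \<and> real k * \<epsilon> \<le> C p \<and> C p < (real k + 1) * \<epsilon>}" for k
  have Usub: "U k \<subseteq> g ` {a..b}" for k
  proof
    fix x assume "x \<in> U k"
    then obtain s p where "x = g s" "p < M" "t p \<le> s" "s \<le> t (Suc p)" unfolding U_def by blast
    moreover have "t p \<in> {a..b}" "t (Suc p) \<in> {a..b}" using tin \<open>p < M\<close> by auto
    ultimately show "x \<in> g ` {a..b}" by auto
  qed
  have bimg: "bounded (g ` {a..b})"
    using compact_continuous_image[OF cont] compact_imp_bounded by blast
  have Ubd: "bounded (U k)" for k using bounded_subset[OF bimg Usub] .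
  have pair: "norm (g s - g s') < \<epsilon> + 2 * \<eta>"
    if "p < M" "t p \<le> s" "s \<le> t (Suc p)" "real k * \<epsilon> \<le> C p" "C p < (real k + 1) * \<epsilon>"
       "p' < M" "t p' \<le> s'" "s' \<le> t (Suc p')" "real k * \<epsilon> \<le> C p'" "C p' < (real k + 1) * \<epsilon>"
       "p \<le> p'" for p p' s s' k
  proof -
    have "norm (g s - g s') \<le> norm (g s - g (t p)) + norm (g (t p') - g (t p)) + norm (g s' - g (t p'))"
      using norm_triangle_ineq[of "g s - g (t p)" "g (t p) - g (t p')"]
        norm_triangle_ineq[of "g s - g (t p')" "g (t p') - g s'"]
      by (simp add: norm_minus_commute)
    also have "\<dots> < \<eta> + (C p' - C p) + \<eta>"
      using close[OF that(1-3)] close[OF that(6-8)] tri[OF that(11)] by linarith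
    also have "\<dots> \<le> \<epsilon> + 2 * \<eta>" using that by (simp add: algebra_simps)
    finally show ?thesis .
  qed
  have Udm: "diameter (U k) \<le> \<epsilon> + 2 * \<epsilon>\<^sup>2" for k
  proof (rule diameter_le)
    show "U k \<noteq> {} \<or> 0 \<le> \<epsilon> + 2 * \<epsilon>\<^sup>2" using e by simp
  next
    fix x y assume "x \<in> U k" "y \<in> U k"
    then obtain s p s' p' where A: "x = g s" "p < M" "t p \<le> s" "s \<le> t (Suc p)" "real k * \<epsilon> \<le> C p" "C p < (real k + 1) * \<epsilon>"
      and B: "y = g s'" "p' < M" "t p' \<le> s'" "s' \<le> t (Suc p')" "real k * \<epsilon> \<le> C p'" "C p' < (real k + 1) * \<epsilon>"
      unfolding U_def by blast
    show "norm (x - y) \<le> \<epsilon> + 2 * \<epsilon>\<^sup>2"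
    proof (cases "p \<le> p'")
      case True
      show ?thesis using pair[OF A(2-6) B(2-6) True] A(1) B(1) by (simp add: \<eta>_def)
    next
      case False
      then have "p' \<le> p" by simp
      from pair[OF B(2-6) A(2-6) this] A(1) B(1) show ?thesis
        by (simp add: \<eta>_def norm_minus_commute)
    qed
  qed
  define K where "K = nat \<lfloor>l / \<epsilon>\<rfloor> + 1"
  have l0: "0 \<le> l" using CM C0[of M] by linarith
  have Kb: "real K \<le> l / \<epsilon> + 1"
    using l0 e by (simp add: K_def)
  have cov: "g ` {a..b} \<subseteq> (\<Union>k<K. U k)"
  proof
    fix x assume "x \<in> g ` {a..b}"
    then obtain s where s: "s \<in> {a..b}" "x = g s" by auto
    have "t 0 \<le> s" "s \<le> t (Suc (M - 1))" using s t0 tM Mpos by auto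
    then obtain p where p: "p \<le> M - 1" "t p \<le> s" "s \<le> t (Suc p)" using find_piece by blast
    define k where "k = nat \<lfloor>C p / \<epsilon>\<rfloor>"
    have Cpe: "0 \<le> C p / \<epsilon>" using C0 e by simp
    have rk: "real k = of_int \<lfloor>C p / \<epsilon>\<rfloor>" using Cpe by (simp add: k_def)
    have "real k \<le> C p / \<epsilon>" unfolding rk by (rule of_int_floor_le)
    then have k1: "real k * \<epsilon> \<le> C p"
      using e by (simp add: le_divide_eq)
    have "C p / \<epsilon> < real k + 1" unfolding rk by (rule real_of_int_floor_add_one_gt)
    then have k2: "C p < (real k + 1) * \<epsilon>"
      using e by (simp add: divide_less_eq)
    have "C p \<le> l" using Cmono[of p M] CM p Mpos by linarith
    then have "C p / \<epsilon> \<le> l / \<epsilon>" using e by (simp add: divide_right_mono)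
    then have "k < K" unfolding k_def K_def by (simp add: floor_mono nat_mono le_imp_less_Suc)
    moreover have "p < M" using p Mpos by linarith
    then have "x \<in> U k" unfolding U_def using s p k1 k2 by blast
    ultimately show "x \<in> (\<Union>k<K. U k)" by blast
  qed
  show ?thesis using cov Ubd Udm Kb unfolding l_def by blast
qed


lemma tv_nonneg:
  fixes g :: "real \<Rightarrow> 'a::real_normed_vector"
  assumes "a \<le> b" "bounded_variation_on g a b"
  shows "0 \<le> total_variation g a b"
proof -
  have "norm (g b - g a) \<in> partition_sums g a b"
    unfolding partition_sums_def mem_Collect_eq
    by (rule exI[of _ "\<lambda>i. if i = 0 then a else b"], rule exI[of _ 1]) (use assms in auto)
  then have "norm (g b - g a) \<le> total_variation g a b"
    unfolding total_variation_def using assms(2) unfolding bounded_variation_on_def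
    by (rule cSup_upper)
  then show ?thesis by (meson norm_ge_zero order_trans)
qed

lemma interval_main:
  fixes g :: "real \<Rightarrow> 'a::real_normed_vector"
  assumes ab: "a \<le> b" and cont: "continuous_on {a..b} g" and bv: "bounded_variation_on g a b"
  shows "hausdorff2 (g ` {a..b} \<times> g ` {a..b}) \<le> ennreal (pi / 2 * (total_variation g a b)\<^sup>2)"
  unfolding hausdorff2_def
proof (rule SUP_least)
  fix \<delta> :: real assume "\<delta> \<in> {0<..}"
  then have dpos: "0 < \<delta>" by simp
  define l where "l = total_variation g a b"
  have l0: "0 \<le> l" unfolding l_def using tv_nonneg[OF ab bv] .
  define Cc where "Cc = 2 * l + 3"
  define D where "D = pi / 2 * (2 * l * Cc + Cc\<^sup>2) + 1"
  have Dpos: "0 < D" using l0 by (simp add: D_def Cc_def add_nonneg_pos)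
  show "hausdorff2_approx \<delta> (g ` {a..b} \<times> g ` {a..b}) \<le> ennreal (pi / 2 * l\<^sup>2)"
  proof (rule ennreal_le_epsilon)
    fix e :: real assume epos: "0 < e"
    define \<epsilon> where "\<epsilon> = min (1/2) (min (\<delta> / 7) (e / D))"
    have e0: "0 < \<epsilon>" using dpos epos Dpos by (simp add: \<epsilon>_def)
    have e1: "\<epsilon> \<le> 1" by (simp add: \<epsilon>_def)
    have e2: "\<epsilon> \<le> \<delta> / 7" unfolding \<epsilon>_def by linarith
    have e3: "\<epsilon> \<le> e / D" unfolding \<epsilon>_def by linarith
    obtain K U where cov: "g ` {a..b} \<subseteq> (\<Union>k<K. U k)" and bd: "\<And>k. bounded (U k)"
      and dm: "\<And>k. diameter (U k) \<le> \<epsilon> + 2 * \<epsilon>\<^sup>2" and Kb: "real K \<le> l / \<epsilon> + 1"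
      using interval_cover[OF ab cont bv e0] unfolding l_def by blast
    define d where "d = \<epsilon> + 2 * \<epsilon>\<^sup>2"
    have d0: "0 \<le> d" using e0 by (simp add: d_def)
    have "\<epsilon>\<^sup>2 \<le> \<epsilon>" using e0 e1 by (simp add: power2_eq_square mult_left_le)
    then have d3: "d \<le> 3 * \<epsilon>" by (simp add: d_def)
    have s2: "sqrt 2 < 2" by (simp add: real_less_lsqrt)
    have "sqrt 2 * d \<le> 2 * d" using s2 d0 by (intro mult_right_mono) auto
    also have "\<dots> \<le> 6 * \<epsilon>" using d3 by simp
    also have "\<dots> < \<delta>" using e2 e0 by simp
    finally have dl: "sqrt 2 * d < \<delta>" .
    have ap: "hausdorff2_approx \<delta> (g ` {a..b} \<times> g ` {a..b}) \<le> ennreal (pi / 2 * (real K * d)\<^sup>2)"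
      by (rule approx_cover[OF cov bd _ d0 dl]) (use dm in \<open>simp add: d_def\<close>)
    have "real K * d \<le> (l / \<epsilon> + 1) * d" using Kb d0 by (rule mult_right_mono)
    also have "\<dots> = l + 2 * l * \<epsilon> + \<epsilon> + 2 * \<epsilon>\<^sup>2"
      using e0 by (simp add: d_def field_simps power2_eq_square)
    also have "\<dots> \<le> l + Cc * \<epsilon>"
      using \<open>\<epsilon>\<^sup>2 \<le> \<epsilon>\<close> by (simp add: Cc_def algebra_simps)
    finally have Kd: "real K * d \<le> l + Cc * \<epsilon>" .
    have Kd0: "0 \<le> real K * d" using d0 by simp
    have "(real K * d)\<^sup>2 \<le> (l + Cc * \<epsilon>)\<^sup>2" using Kd Kd0 by (rule power_mono)
    also have "\<dots> = l\<^sup>2 + (2 * l * Cc + Cc\<^sup>2 * \<epsilon>) * \<epsilon>"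
      by (simp add: power2_eq_square algebra_simps)
    also have "\<dots> \<le> l\<^sup>2 + (2 * l * Cc + Cc\<^sup>2) * \<epsilon>"
      using e0 e1 l0 by (intro add_left_mono mult_right_mono) (auto simp: Cc_def mult_left_le)
    finally have sq: "(real K * d)\<^sup>2 \<le> l\<^sup>2 + (2 * l * Cc + Cc\<^sup>2) * \<epsilon>" .
    have "pi / 2 * (real K * d)\<^sup>2 \<le> pi / 2 * l\<^sup>2 + (pi / 2 * (2 * l * Cc + Cc\<^sup>2)) * \<epsilon>"
      using mult_left_mono[OF sq, of "pi/2"] by (simp add: algebra_simps)
    also have "(pi / 2 * (2 * l * Cc + Cc\<^sup>2)) * \<epsilon> \<le> D * \<epsilon>"
      using e0 by (intro mult_right_mono) (auto simp: D_def)
    also have "D * \<epsilon> \<le> e" using e3 Dpos by (simp add: le_divide_eq mult.commute)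
    finally have fin: "pi / 2 * (real K * d)\<^sup>2 \<le> pi / 2 * l\<^sup>2 + e" by simp
    have "ennreal (pi / 2 * (real K * d)\<^sup>2) \<le> ennreal (pi / 2 * l\<^sup>2 + e)"
      using fin by (rule ennreal_leI)
    also have "\<dots> = ennreal (pi / 2 * l\<^sup>2) + ennreal e"
      using epos by (intro ennreal_plus) auto
    finally show "hausdorff2_approx \<delta> (g ` {a..b} \<times> g ` {a..b}) \<le> ennreal (pi / 2 * l\<^sup>2) + ennreal e"
      using ap by (rule order_trans[rotated])
  qed
qed


lemma circle_image: "circle_param c ` {0..1} = c ` sphere 0 1"
proof
  show "circle_param c ` {0..1} \<subseteq> c ` sphere 0 1"
    unfolding circle_param_def by (auto simp: dist_norm)
next
  show "c ` sphere 0 1 \<subseteq> circle_param c ` {0..1}"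
  proof
    fix w assume "w \<in> c ` sphere 0 1"
    then obtain z where z: "norm z = 1" "w = c z" by (auto simp: dist_norm)
    have "z \<noteq> 0" using z by auto
    then have zz: "cis (Arg z) = z" using z cis_Arg[of z] by (auto simp: sgn_div_norm)
    have ab: "- pi < Arg z" "Arg z \<le> pi" using Arg_bounded[of z] by auto
    show "w \<in> circle_param c ` {0..1}"
    proof (cases "0 \<le> Arg z")
      case True
      have "Arg z / (2 * pi) \<in> {0..1}" using True ab pi_gt_zero by (auto simp: field_simps)
      moreover have "circle_param c (Arg z / (2 * pi)) = w" using zz z by (simp add: circle_param_def)
      ultimately show ?thesis by (metis image_eqI)
    next
      case False
      have "Arg z / (2 * pi) + 1 \<in> {0..1}" using False ab pi_gt_zero by (auto simp: field_simps)
      moreover have "2 * pi * (Arg z / (2 * pi) + 1) = Arg z + 2 * pi" by (simp add: field_simps)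
      then have "circle_param c (Arg z / (2 * pi) + 1) = w"
        using zz z by (simp add: circle_param_def cis_mult[symmetric])
      ultimately show ?thesis by (metis image_eqI)
    qed
  qed
qed

lemma circle_cont:
  assumes "continuous_on (sphere 0 1) c"
  shows "continuous_on {0..1} (circle_param c)"
  unfolding circle_param_def
  by (rule continuous_on_compose2[OF assms]) (auto intro!: continuous_intros simp: dist_norm)

theorem lemma5p1:
  fixes g :: "real \<Rightarrow> 'a::euclidean_space"
    and c :: "complex \<Rightarrow> 'a"
    and a b l :: real
  shows "(a \<le> b \<and> continuous_on {a..b} g \<and> bounded_variation_on g a b
            \<and> l = total_variation g a b
          \<longrightarrow> hausdorff2 (g ` {a..b} \<times> g ` {a..b}) \<le> ennreal (pi / 2 * l\<^sup>2)
            \<and> hausdorff2 (g ` {a..b} \<times> g ` {a..b}) < \<infinity>)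
       \<and> (continuous_on (sphere 0 1) c \<and> circle_bounded_variation c
            \<and> l = circle_total_variation c
          \<longrightarrow> hausdorff2 (c ` sphere 0 1 \<times> c ` sphere 0 1) \<le> ennreal (pi / 2 * l\<^sup>2)
            \<and> hausdorff2 (c ` sphere 0 1 \<times> c ` sphere 0 1) < \<infinity>)"
proof (intro conjI impI)
  assume h: "a \<le> b \<and> continuous_on {a..b} g \<and> bounded_variation_on g a b \<and> l = total_variation g a b"
  show le1: "hausdorff2 (g ` {a..b} \<times> g ` {a..b}) \<le> ennreal (pi / 2 * l\<^sup>2)"
    using interval_main[of a b g] h by simp
  show "hausdorff2 (g ` {a..b} \<times> g ` {a..b}) < \<infinity>"
    using le1 by (simp add: ennreal_less_top le_less_trans)
next
  assume h: "continuous_on (sphere 0 1) c \<and> circle_bounded_variation c \<and> l = circle_total_variation c"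
  have "hausdorff2 (circle_param c ` {0..1} \<times> circle_param c ` {0..1}) \<le> ennreal (pi / 2 * l\<^sup>2)"
    using interval_main[of 0 1 "circle_param c"] h circle_cont[of c]
    by (simp add: circle_bounded_variation_def circle_total_variation_def)
  then show le1: "hausdorff2 (c ` sphere 0 1 \<times> c ` sphere 0 1) \<le> ennreal (pi / 2 * l\<^sup>2)"
    by (simp add: circle_image)
  show "hausdorff2 (c ` sphere 0 1 \<times> c ` sphere 0 1) < \<infinity>"
    using le1 by (simp add: ennreal_less_top le_less_trans)
qed

end
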